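(* Let $\Omega\subseteq\mathbb{R}^d$ be compact and convex with non-empty interior $\Omega^\circ$, and let $p_0,p_1$ be Lebesgue densities supported on $\Omega$ that are continuous, uniformly bounded and bounded away from zero on $\Omega$. For $t\in(0,1)$, $z\in\Omega$ let $S_t(z)=\{\delta: z-t\delta\in\Omega,\ z+(1-t)\delta\in\Omega\}$ and for $z\in\Omega^\circ$ $$v(t,z)=\frac{\int_{S_t(z)}\delta\,p_0(z-t\delta)p_1(z+(1-t)\delta)d\delta}{\int_{S_t(z)}p_0(z-t\delta)p_1(z+(1-t)\delta)d\delta}.$$ Let $\hat p_0,\hat p_1$ be estimators (based on $n$ observations) of $p_0,p_1$, redefined to be $0$ outside $\Omega$, let $$r_n=\sup_{x\in\Omega}\max\Big\{\Big|\ln\frac{\hat p_0(x)}{p_0(x)}\Big|,\Big|\ln\frac{\hat p_1(x)}{p_1(x)}\Big|\Big\},$$ and define $\hat v^{\mathrm{den}}(t,z)$ by the same formula as $v(t,z)$ with $p_0,p_1$ replaced by $\hat p_0,\hat p_1$. Then for all $n\ge1$, $$\|\hat v^{\mathrm{den}}-v\|_\infty=\sup_{t\in[0,1],\,z\in\Omega^\circ}\|\hat v^{\mathrm{den}}(t,z)-v(t,z)\|\le2\,\mathrm{diam}(\Omega)(e^{4r_n}-1).$$ If $r_n=o_p(1)$ as $n\to\infty$, then $\sup_{t\in[0,1],\,z\in\Omega^\circ}\|\hat v^{\mathrm{den}}(t,z)-v(t,z)\|=O_p(r_n)$ as $n\to\infty$.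
   Context: The estimators need not be densities; $\hat v^{\mathrm{den}}$ is the density-based estimator of the rectified flow velocity field. *)

theory Defs
  imports "HOL-Probability.Probability"
begin

definition disp_set :: "'a::euclidean_space set \<Rightarrow> real \<Rightarrow> 'a \<Rightarrow> 'a set" where
  "disp_set \<Omega> t z = {\<delta>. z - t *\<^sub>R \<delta> \<in> \<Omega> \<and> z + (1 - t) *\<^sub>R \<delta> \<in> \<Omega>}"

definition rf_velocity ::
  "'a::euclidean_space set \<Rightarrow> ('a \<Rightarrow> real) \<Rightarrow> ('a \<Rightarrow> real) \<Rightarrow> real \<Rightarrow> 'a \<Rightarrow> 'a" where
  "rf_velocity \<Omega> q0 q1 t z =
     (1 / (LINT \<delta>:disp_set \<Omega> t z|lborel. q0 (z - t *\<^sub>R \<delta>) * q1 (z + (1 - t) *\<^sub>R \<delta>)))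
       *\<^sub>R (LINT \<delta>:disp_set \<Omega> t z|lborel.
              (q0 (z - t *\<^sub>R \<delta>) * q1 (z + (1 - t) *\<^sub>R \<delta>)) *\<^sub>R \<delta>)"

definition restrict0 :: "'a set \<Rightarrow> ('a \<Rightarrow> real) \<Rightarrow> 'a \<Rightarrow> real" where
  "restrict0 \<Omega> q x = (if x \<in> \<Omega> then q x else 0)"

text \<open>r_n = sup over \<Omega> of max |ln(q0/p0)|, |ln(q1/p1)|; equals \<infinity> where some
  estimate is non-positive (the logarithm is then -\<infinity> or undefined).\<close>
definition log_ratio_err ::
  "'a set \<Rightarrow> ('a \<Rightarrow> real) \<Rightarrow> ('a \<Rightarrow> real) \<Rightarrow> ('a \<Rightarrow> real) \<Rightarrow> ('a \<Rightarrow> real) \<Rightarrow> ereal" where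
  "log_ratio_err \<Omega> p0 p1 q0 q1 =
     (SUP x\<in>\<Omega>. if q0 x > 0 \<and> q1 x > 0
               then ereal (max \<bar>ln (q0 x / p0 x)\<bar> \<bar>ln (q1 x / p1 x)\<bar>) else \<infinity>)"

text \<open>Outer probability (as in van der Vaart & Wellner), so that o_p/O_p make sense
  without measurability assumptions on suprema.\<close>
definition outer_prob :: "'b measure \<Rightarrow> 'b set \<Rightarrow> real" where
  "outer_prob M A = Inf {measure M B | B. B \<in> sets M \<and> A \<subseteq> B}"

definition small_op_one :: "'b measure \<Rightarrow> (nat \<Rightarrow> 'b \<Rightarrow> ereal) \<Rightarrow> bool" where
  "small_op_one M X \<longleftrightarrow>
     (\<forall>\<epsilon>>0. (\<lambda>n. outer_prob M {\<omega>\<in>space M. \<bar>X n \<omega>\<bar> > ereal \<epsilon>}) \<longlonglongrightarrow> 0)"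

definition big_Op :: "'b measure \<Rightarrow> (nat \<Rightarrow> 'b \<Rightarrow> ereal) \<Rightarrow> (nat \<Rightarrow> 'b \<Rightarrow> ereal) \<Rightarrow> bool" where
  "big_Op M X R \<longleftrightarrow>
     (\<forall>\<epsilon>>0. \<exists>C::real. \<exists>N. \<forall>n\<ge>N.
        outer_prob M {\<omega>\<in>space M. \<bar>X n \<omega>\<bar> > ereal C * \<bar>R n \<omega>\<bar>} < \<epsilon>)"

end

theory Submission
  imports Defs
begin


lemma key:
  fixes M :: "'a::euclidean_space measure" and w u :: "'a \<Rightarrow> real"
  assumes iw: "integrable M w" and iu: "integrable M u"
    and iwx: "integrable M (\<lambda>x. w x *\<^sub>R x)" and iux: "integrable M (\<lambda>x. u x *\<^sub>R x)"
    and w0: "\<And>x. 0 \<le> w x" and ab1: "\<And>x. a * w x \<le> u x" and ab2: "\<And>x. u x \<le> b * w x"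
    and a0: "0 < a" and W0: "0 < integral\<^sup>L M w"
    and D: "\<And>x y. w x \<noteq> 0 \<Longrightarrow> w y \<noteq> 0 \<Longrightarrow> norm (x - y) \<le> D"
  shows "norm ((1 / integral\<^sup>L M u) *\<^sub>R integral\<^sup>L M (\<lambda>x. u x *\<^sub>R x)
              - (1 / integral\<^sup>L M w) *\<^sub>R integral\<^sup>L M (\<lambda>x. w x *\<^sub>R x)) \<le> D * (b - a) / a"
proof -
  define W where "W = integral\<^sup>L M w"
  define U where "U = integral\<^sup>L M u"
  define Iw where "Iw = integral\<^sup>L M (\<lambda>x. w x *\<^sub>R x)"
  define Iu where "Iu = integral\<^sup>L M (\<lambda>x. u x *\<^sub>R x)"
  define v where "v = (1/W) *\<^sub>R Iw"
  have W0': "0 < W" using W0 W_def by simp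
  have Iwv: "Iw = W *\<^sub>R v" using W0' by (simp add: v_def)
  have "integral\<^sup>L M (\<lambda>x. a * w x) \<le> U"
    unfolding U_def by (rule integral_mono[OF integrable_mult_right[OF iw] iu]) (use ab1 in auto)
  hence UaW: "a * W \<le> U" by (simp add: W_def)
  have U0: "0 < U" using UaW W0' a0 by (smt (verit) mult_pos_pos)
  have "\<exists>x0. w x0 \<noteq> 0"
  proof (rule ccontr)
    assume "\<nexists>x0. w x0 \<noteq> 0"
    then have "w = (\<lambda>_. 0)" by auto
    then show False using W0 by simp
  qed
  then obtain x0 where "w x0 \<noteq> 0" by blast
  hence D0: "0 \<le> D" using D[of x0 x0] by simp
  have vbound: "norm (x - v) \<le> D" if wx: "w x \<noteq> 0" for x
  proof -
    have i1: "integrable M (\<lambda>y. w y *\<^sub>R x)" using iw by simp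
    have "integral\<^sup>L M (\<lambda>y. w y *\<^sub>R (x - y)) = integral\<^sup>L M (\<lambda>y. w y *\<^sub>R x - w y *\<^sub>R y)"
      by (simp add: scaleR_diff_right)
    also have "\<dots> = W *\<^sub>R x - Iw"
      using i1 iwx iw by (simp add: Iw_def W_def)
    finally have eq: "x - v = (1/W) *\<^sub>R integral\<^sup>L M (\<lambda>y. w y *\<^sub>R (x - y))"
      using W0' by (simp add: Iwv scaleR_diff_right)
    have i2: "integrable M (\<lambda>y. w y *\<^sub>R (x - y))"
      using i1 iwx by (simp add: scaleR_diff_right)
    have "norm (integral\<^sup>L M (\<lambda>y. w y *\<^sub>R (x - y))) \<le> integral\<^sup>L M (\<lambda>y. norm (w y *\<^sub>R (x - y)))"
      by (rule integral_norm_bound)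
    also have "\<dots> \<le> integral\<^sup>L M (\<lambda>y. w y * D)"
    proof (rule integral_mono)
      show "integrable M (\<lambda>y. norm (w y *\<^sub>R (x - y)))" by (rule integrable_norm[OF i2])
      show "integrable M (\<lambda>y. w y * D)" using iw by simp
      fix y show "norm (w y *\<^sub>R (x - y)) \<le> w y * D"
        using D[OF wx, of y] w0[of y] by (cases "w y = 0") (auto simp: mult_left_mono)
    qed
    also have "\<dots> = W * D" by (simp add: W_def)
    finally have nJ: "norm (integral\<^sup>L M (\<lambda>y. w y *\<^sub>R (x - y))) \<le> W * D" .
    have "norm (x - v) = norm (integral\<^sup>L M (\<lambda>y. w y *\<^sub>R (x - y))) / W"
      using W0' by (subst eq) simp
    also have "\<dots> \<le> D" using nJ W0' by (simp add: pos_divide_le_eq mult.commute)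
    finally show ?thesis .
  qed
  have feq: "(\<lambda>x. (u x - a * w x) *\<^sub>R (x - v)) = (\<lambda>x. (u x *\<^sub>R x - u x *\<^sub>R v) - (a *\<^sub>R (w x *\<^sub>R x) - (a * w x) *\<^sub>R v))"
    by (auto simp: algebra_simps fun_eq_iff)
  have i3: "integrable M (\<lambda>x. (u x - a * w x) *\<^sub>R (x - v))"
    unfolding feq
    by (intro Bochner_Integration.integrable_diff integrable_scaleR_right integrable_scaleR_left
          integrable_mult_right iu iw iux iwx)
  have "integral\<^sup>L M (\<lambda>x. (u x - a * w x) *\<^sub>R (x - v))
      = integral\<^sup>L M (\<lambda>x. (u x *\<^sub>R x - u x *\<^sub>R v) - (a *\<^sub>R (w x *\<^sub>R x) - (a * w x) *\<^sub>R v))"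
    by (simp add: feq)
  also have "\<dots> = (Iu - U *\<^sub>R v) - (a *\<^sub>R Iw - (a * W) *\<^sub>R v)"
  proof -
    have A1: "integrable M (\<lambda>x. u x *\<^sub>R v)" by (rule integrable_scaleR_left[OF iu])
    have B1: "integrable M (\<lambda>x. a *\<^sub>R (w x *\<^sub>R x))" by (rule integrable_scaleR_right[OF iwx])
    have B2: "integrable M (\<lambda>x. (a * w x) *\<^sub>R v)" by (rule integrable_scaleR_left[OF integrable_mult_right[OF iw]])
    have A: "integrable M (\<lambda>x. u x *\<^sub>R x - u x *\<^sub>R v)" by (rule Bochner_Integration.integrable_diff[OF iux A1])
    have B: "integrable M (\<lambda>x. a *\<^sub>R (w x *\<^sub>R x) - (a * w x) *\<^sub>R v)" by (rule Bochner_Integration.integrable_diff[OF B1 B2])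
    have "integral\<^sup>L M (\<lambda>x. (u x *\<^sub>R x - u x *\<^sub>R v) - (a *\<^sub>R (w x *\<^sub>R x) - (a * w x) *\<^sub>R v))
       = integral\<^sup>L M (\<lambda>x. u x *\<^sub>R x - u x *\<^sub>R v) - integral\<^sup>L M (\<lambda>x. a *\<^sub>R (w x *\<^sub>R x) - (a * w x) *\<^sub>R v)"
      by (rule Bochner_Integration.integral_diff[OF A B])
    also have "integral\<^sup>L M (\<lambda>x. u x *\<^sub>R x - u x *\<^sub>R v) = Iu - U *\<^sub>R v"
      unfolding Iu_def U_def by (subst Bochner_Integration.integral_diff[OF iux A1]) (simp add: iu)
    also have "integral\<^sup>L M (\<lambda>x. a *\<^sub>R (w x *\<^sub>R x) - (a * w x) *\<^sub>R v) = a *\<^sub>R Iw - (a * W) *\<^sub>R v"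
      unfolding Iw_def W_def by (subst Bochner_Integration.integral_diff[OF B1 B2],
         simp only: integral_scaleR_right integral_scaleR_left[OF integrable_mult_right[OF iw]], simp add: iw)
    finally show ?thesis .
  qed
  also have "\<dots> = Iu - U *\<^sub>R v" by (simp add: Iwv)
  finally have eq2: "(1/U) *\<^sub>R Iu - v = (1/U) *\<^sub>R integral\<^sup>L M (\<lambda>x. (u x - a * w x) *\<^sub>R (x - v))"
    using U0 by (simp add: scaleR_diff_right)
  have "norm (integral\<^sup>L M (\<lambda>x. (u x - a * w x) *\<^sub>R (x - v))) \<le> integral\<^sup>L M (\<lambda>x. norm ((u x - a * w x) *\<^sub>R (x - v)))"
    by (rule integral_norm_bound)
  also have "\<dots> \<le> integral\<^sup>L M (\<lambda>x. ((b - a) * D) * w x)"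
  proof (rule integral_mono)
    show "integrable M (\<lambda>x. norm ((u x - a * w x) *\<^sub>R (x - v)))" by (rule integrable_norm[OF i3])
    show "integrable M (\<lambda>x. ((b - a) * D) * w x)" using iw by simp
    fix x
    have h1: "0 \<le> u x - a * w x" using ab1[of x] by simp
    have h2: "u x - a * w x \<le> (b - a) * w x" using ab2[of x] by (simp add: algebra_simps)
    show "norm ((u x - a * w x) *\<^sub>R (x - v)) \<le> ((b - a) * D) * w x"
    proof (cases "w x = 0")
      case True
      then have "u x = 0" using ab1[of x] ab2[of x] by simp
      then show ?thesis using True by simp
    next
      case False
      have "norm ((u x - a * w x) *\<^sub>R (x - v)) = (u x - a * w x) * norm (x - v)"
        using h1 by simp
      also have "\<dots> \<le> ((b - a) * w x) * D"
        by (rule mult_mono[OF h2 vbound[OF False]]) (use h1 h2 D0 in auto)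
      finally show ?thesis by (simp add: algebra_simps)
    qed
  qed
  also have "\<dots> = ((b - a) * D) * W" by (simp add: W_def)
  finally have n1: "norm (integral\<^sup>L M (\<lambda>x. (u x - a * w x) *\<^sub>R (x - v))) \<le> ((b - a) * D) * W" .
  have "norm ((1/U) *\<^sub>R Iu - v) \<le> ((b - a) * D) * W / U"
    using n1 U0 by (simp add: eq2 divide_right_mono)
  also have "\<dots> \<le> ((b - a) * D) * W / (a * W)"
  proof (rule divide_left_mono)
    have "a * w x0 \<le> b * w x0" using ab1[of x0] ab2[of x0] by linarith
    moreover have "0 < w x0" using w0[of x0] \<open>w x0 \<noteq> 0\<close> by simp
    ultimately have "0 \<le> b - a" by (simp add: mult_le_cancel_right)
    then show "0 \<le> (b - a) * D * W" using D0 W0' by simp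
  qed (use UaW a0 W0' U0 in auto)
  also have "\<dots> = D * (b - a) / a" using W0' a0 by (simp add: field_simps)
  finally show ?thesis by (simp add: Iu_def U_def v_def Iw_def W_def)
qed



lemma disp_closed:
  fixes \<Omega> :: "'a::euclidean_space set"
  assumes "closed \<Omega>"
  shows "closed (disp_set \<Omega> t z)"
proof -
  have "disp_set \<Omega> t z = (\<lambda>\<delta>. z - t *\<^sub>R \<delta>) -` \<Omega> \<inter> (\<lambda>\<delta>. z + (1 - t) *\<^sub>R \<delta>) -` \<Omega>"
    by (auto simp: disp_set_def)
  moreover have "closed ((\<lambda>\<delta>. z - t *\<^sub>R \<delta>) -` \<Omega>)"
    by (rule continuous_closed_vimage[OF assms]) (intro continuous_intros)
  moreover have "closed ((\<lambda>\<delta>. z + (1 - t) *\<^sub>R \<delta>) -` \<Omega>)"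
    by (rule continuous_closed_vimage[OF assms]) (intro continuous_intros)
  ultimately show ?thesis by auto
qed

lemma disp_diam:
  fixes \<Omega> :: "'a::euclidean_space set"
  assumes "bounded \<Omega>" "0 \<le> t" "t \<le> 1" "d \<in> disp_set \<Omega> t z" "e \<in> disp_set \<Omega> t z"
  shows "norm (d - e) \<le> 2 * diameter \<Omega>"
proof (cases "t \<ge> 1/2")
  case True
  have "dist (z - t *\<^sub>R e) (z - t *\<^sub>R d) \<le> diameter \<Omega>"
    using assms by (intro diameter_bounded_bound) (auto simp: disp_set_def)
  moreover have "dist (z - t *\<^sub>R e) (z - t *\<^sub>R d) = t * norm (d - e)"
    using assms(2) by (simp add: dist_norm algebra_simps flip: scaleR_diff_right)
  ultimately have "t * norm (d - e) \<le> diameter \<Omega>" by simp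
  moreover have "(1/2) * norm (d - e) \<le> t * norm (d - e)"
    using True by (intro mult_right_mono) auto
  ultimately show ?thesis by simp
next
  case False
  have "dist (z + (1 - t) *\<^sub>R d) (z + (1 - t) *\<^sub>R e) \<le> diameter \<Omega>"
    using assms by (intro diameter_bounded_bound) (auto simp: disp_set_def)
  moreover have "dist (z + (1 - t) *\<^sub>R d) (z + (1 - t) *\<^sub>R e) = (1 - t) * norm (d - e)"
  proof -
    have "(z + (1 - t) *\<^sub>R d) - (z + (1 - t) *\<^sub>R e) = (1 - t) *\<^sub>R (d - e)"
      by (simp add: scaleR_diff_right)
    then show ?thesis using assms(3) by (simp add: dist_norm)
  qed
  ultimately have "(1 - t) * norm (d - e) \<le> diameter \<Omega>" by simp
  moreover have "(1/2) * norm (d - e) \<le> (1 - t) * norm (d - e)"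
    using False by (intro mult_right_mono) auto
  ultimately show ?thesis by simp
qed

lemma disp_bounded:
  fixes \<Omega> :: "'a::euclidean_space set"
  assumes "bounded \<Omega>" "0 \<le> t" "t \<le> 1" "z \<in> \<Omega>"
  shows "bounded (disp_set \<Omega> t z)"
proof -
  obtain R where R: "R > 0" "\<And>x. x \<in> \<Omega> \<Longrightarrow> norm x \<le> R" using assms(1) bounded_pos by metis
  have "norm d \<le> 4 * R" if d: "d \<in> disp_set \<Omega> t z" for d
  proof (cases "t \<ge> 1/2")
    case True
    have "norm (t *\<^sub>R d) \<le> norm z + norm (z - t *\<^sub>R d)" by (metis norm_triangle_sub add.commute norm_minus_commute)
    also have "\<dots> \<le> 2 * R" using R(2)[OF assms(4)] R(2)[of "z - t *\<^sub>R d"] d by (auto simp: disp_set_def)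
    finally have "t * norm d \<le> 2 * R" using assms(2) by simp
    moreover have "(1/2) * norm d \<le> t * norm d" using True by (intro mult_right_mono) auto
    ultimately show ?thesis by simp
  next
    case False
    have "norm ((1 - t) *\<^sub>R d) \<le> norm z + norm (z + (1 - t) *\<^sub>R d)"
      by (metis add_diff_cancel_left' norm_triangle_ineq4 add.commute norm_minus_commute)
    also have "\<dots> \<le> 2 * R" using R(2)[OF assms(4)] R(2)[of "z + (1 - t) *\<^sub>R d"] d by (auto simp: disp_set_def)
    finally have "(1 - t) * norm d \<le> 2 * R" using assms(3) by simp
    moreover have "(1/2) * norm d \<le> (1 - t) * norm d" using False by (intro mult_right_mono) auto
    ultimately show ?thesis by simp
  qed
  then show ?thesis unfolding bounded_iff by blast
qed

lemma disp_ball: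
  fixes \<Omega> :: "'a::euclidean_space set"
  assumes "z \<in> interior \<Omega>" "0 \<le> t" "t \<le> 1"
  obtains e where "e > 0" "ball 0 e \<subseteq> disp_set \<Omega> t z"
proof -
  obtain e where e: "e > 0" "ball z e \<subseteq> \<Omega>" using assms(1) mem_interior by metis
  have "d \<in> disp_set \<Omega> t z" if "d \<in> ball 0 e" for d
  proof -
    have nd: "norm d < e" using that by simp
    have "norm (t *\<^sub>R d) < e" using nd assms(2,3) by (simp add: abs_of_nonneg) (smt (verit) mult_left_le_one_le norm_ge_zero)
    moreover have "norm ((1 - t) *\<^sub>R d) < e" using nd assms(2,3) by (simp add: abs_of_nonneg) (smt (verit) mult_left_le_one_le norm_ge_zero)
    ultimately show ?thesis using e(2) by (auto simp: disp_set_def dist_norm)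
  qed
  then show ?thesis using that e(1) by blast
qed



lemma integr_S:
  fixes S :: "'a::euclidean_space set" and f :: "'a \<Rightarrow> real"
  assumes S: "S \<in> sets borel" "bounded S" and f: "f \<in> borel_measurable borel"
    and K: "\<And>x. x \<in> S \<Longrightarrow> \<bar>f x\<bar> \<le> K"
  shows "integrable lborel (\<lambda>x. indicator S x * f x)"
    and "integrable lborel (\<lambda>x. (indicator S x * f x) *\<^sub>R x)"
proof -
  obtain R where R: "R > 0" "\<And>x. x \<in> S \<Longrightarrow> norm x \<le> R" using S(2) bounded_pos by metis
  have fin: "emeasure lborel S < \<infinity>" by (rule emeasure_bounded_finite[OF S(2)])
  show "integrable lborel (\<lambda>x. indicator S x * f x)"
  proof (rule integrableI_bounded_set[where A=S and B=K])
    show "S \<in> sets lborel" using S by simp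
    show "(\<lambda>x. indicator S x * f x) \<in> borel_measurable lborel" using S f by measurable
  qed (use fin K in auto)
  show "integrable lborel (\<lambda>x. (indicator S x * f x) *\<^sub>R x)"
  proof (rule integrableI_bounded_set[where A=S and B="K * R"])
    show "S \<in> sets lborel" using S by simp
    show "(\<lambda>x. (indicator S x * f x) *\<^sub>R x) \<in> borel_measurable lborel" using S f by measurable
    show "AE x in lborel. x \<in> S \<longrightarrow> norm ((indicator S x * f x) *\<^sub>R x) \<le> K * R"
    proof (rule AE_I2, rule impI)
      fix x assume x: "x \<in> S"
      have "\<bar>f x\<bar> * norm x \<le> K * R" using K[OF x] R(2)[OF x] by (intro mult_mono) auto
      then show "norm ((indicator S x * f x) *\<^sub>R x) \<le> K * R" using x by simp
    qed
  qed (use fin in auto)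
qed

lemma vel_bound:
  fixes \<Omega> :: "'a::euclidean_space set" and p0 p1 q0 q1 :: "'a \<Rightarrow> real"
  assumes cO: "compact \<Omega>" and z: "z \<in> interior \<Omega>" and t: "0 \<le> t" "t \<le> 1"
    and mp0[measurable]: "p0 \<in> borel_measurable borel" and mp1[measurable]: "p1 \<in> borel_measurable borel"
    and mq0[measurable]: "q0 \<in> borel_measurable borel" and mq1[measurable]: "q1 \<in> borel_measurable borel"
    and c0: "0 < c0" "\<And>x. x \<in> \<Omega> \<Longrightarrow> c0 \<le> p0 x"
    and c1: "0 < c1" "\<And>x. x \<in> \<Omega> \<Longrightarrow> c1 \<le> p1 x"
    and B0: "\<And>x. x \<in> \<Omega> \<Longrightarrow> p0 x \<le> B0"
    and B1: "\<And>x. x \<in> \<Omega> \<Longrightarrow> p1 x \<le> B1"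
    and r0: "\<And>x. x \<in> \<Omega> \<Longrightarrow> exp (-r) * p0 x \<le> q0 x \<and> q0 x \<le> exp r * p0 x"
    and r1: "\<And>x. x \<in> \<Omega> \<Longrightarrow> exp (-r) * p1 x \<le> q1 x \<and> q1 x \<le> exp r * p1 x"
  shows "norm (rf_velocity \<Omega> q0 q1 t z - rf_velocity \<Omega> p0 p1 t z) \<le> 2 * diameter \<Omega> * (exp (4 * r) - 1)"
proof -
  define S where "S = disp_set \<Omega> t z"
  have bO: "bounded \<Omega>" using cO compact_imp_bounded by blast
  have zO: "z \<in> \<Omega>" using z interior_subset by blast
  have Sb[measurable]: "S \<in> sets borel" unfolding S_def
    by (rule borel_closed[OF disp_closed[OF compact_imp_closed[OF cO]]])
  have Sbd: "bounded S" unfolding S_def by (rule disp_bounded[OF bO t zO])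
  have inS: "z - t *\<^sub>R d \<in> \<Omega>" "z + (1 - t) *\<^sub>R d \<in> \<Omega>" if "d \<in> S" for d
    using that by (auto simp: S_def disp_set_def)
  define fp where "fp d = p0 (z - t *\<^sub>R d) * p1 (z + (1 - t) *\<^sub>R d)" for d
  define fq where "fq d = q0 (z - t *\<^sub>R d) * q1 (z + (1 - t) *\<^sub>R d)" for d
  define w where "w d = indicator S d * fp d" for d
  define u where "u d = indicator S d * fq d" for d
  have mfp[measurable]: "fp \<in> borel_measurable borel" unfolding fp_def by measurable
  have mfq[measurable]: "fq \<in> borel_measurable borel" unfolding fq_def by measurable
  have p0pos: "0 < p0 x" if "x \<in> \<Omega>" for x using c0 that by (smt (verit))
  have p1pos: "0 < p1 x" if "x \<in> \<Omega>" for x using c1 that by (smt (verit))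
  have fpS: "c0 * c1 \<le> fp d" "fp d \<le> B0 * B1" "0 \<le> fp d" if "d \<in> S" for d
  proof -
    show "c0 * c1 \<le> fp d" unfolding fp_def using c0 c1 inS[OF that]
      by (intro mult_mono) (auto intro: less_imp_le order.trans[OF less_imp_le[OF c0(1)]])
    show "fp d \<le> B0 * B1" unfolding fp_def using p0pos p1pos B0 B1 inS[OF that]
      by (intro mult_mono') (auto intro: less_imp_le)
    show "0 \<le> fp d" unfolding fp_def using p0pos p1pos inS[OF that] by (simp add: less_imp_le)
  qed
  have fqS: "exp (-2*r) * fp d \<le> fq d" "fq d \<le> exp (2*r) * fp d" if "d \<in> S" for d
  proof -
    have e1: "exp (-2*r) = exp (-r) * exp (-r)" by (simp flip: exp_add)
    have e2: "exp (2*r) = exp r * exp r" by (simp flip: exp_add)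
    have a0: "0 \<le> exp (-r) * p0 (z - t *\<^sub>R d)" "0 \<le> exp (-r) * p1 (z + (1 - t) *\<^sub>R d)"
      using p0pos p1pos inS[OF that] by (auto intro: less_imp_le)
    have "(exp (-r) * p0 (z - t *\<^sub>R d)) * (exp (-r) * p1 (z + (1 - t) *\<^sub>R d))
        \<le> q0 (z - t *\<^sub>R d) * q1 (z + (1 - t) *\<^sub>R d)"
      using r0[OF inS(1)[OF that]] r1[OF inS(2)[OF that]] a0
      by (intro mult_mono') auto
    then show "exp (-2*r) * fp d \<le> fq d" unfolding fp_def fq_def e1 by (simp add: algebra_simps)
    have "q0 (z - t *\<^sub>R d) * q1 (z + (1 - t) *\<^sub>R d)
        \<le> (exp r * p0 (z - t *\<^sub>R d)) * (exp r * p1 (z + (1 - t) *\<^sub>R d))"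
      using r0[OF inS(1)[OF that]] r1[OF inS(2)[OF that]] a0
      by (intro mult_mono) (auto intro: order.trans mult_nonneg_nonneg)
    then show "fq d \<le> exp (2*r) * fp d" unfolding fp_def fq_def e2 by (simp add: algebra_simps)
  qed
  have fqB: "\<bar>fq d\<bar> \<le> exp (2*r) * (B0 * B1)" if "d \<in> S" for d
  proof -
    have "0 \<le> exp (-2*r) * fp d" using fpS(3)[OF that] by simp
    then have "\<bar>fq d\<bar> = fq d" using fqS(1)[OF that] by simp
    also have "\<dots> \<le> exp (2*r) * (B0 * B1)" using fqS(2)[OF that] fpS(2)[OF that]
      by (smt (verit) exp_gt_zero mult_left_mono)
    finally show ?thesis .
  qed
  have fpB: "\<bar>fp d\<bar> \<le> B0 * B1" if "d \<in> S" for d using fpS[OF that] by simp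
  have iw: "integrable lborel w" "integrable lborel (\<lambda>x. w x *\<^sub>R x)"
    unfolding w_def using integr_S[OF Sb Sbd mfp fpB] by auto
  have iu: "integrable lborel u" "integrable lborel (\<lambda>x. u x *\<^sub>R x)"
    unfolding u_def using integr_S[OF Sb Sbd mfq fqB] by auto
  have w0: "0 \<le> w x" for x unfolding w_def using fpS(3) by (simp add: indicator_def)
  have ab1: "exp (-2*r) * w x \<le> u x" for x unfolding w_def u_def using fqS(1) by (simp add: indicator_def)
  have ab2: "u x \<le> exp (2*r) * w x" for x unfolding w_def u_def using fqS(2) by (simp add: indicator_def)
  have Dw: "norm (x - y) \<le> 2 * diameter \<Omega>" if "w x \<noteq> 0" "w y \<noteq> 0" for x y
  proof -
    have "x \<in> S" "y \<in> S" using that by (auto simp: w_def indicator_def split: if_splits)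
    then show ?thesis unfolding S_def by (rule disp_diam[OF bO t])
  qed
  obtain e where e: "e > 0" "ball 0 e \<subseteq> S" using disp_ball[OF z t] unfolding S_def by metis
  have W0: "0 < integral\<^sup>L lborel w"
  proof -
    have "0 < (c0 * c1) * measure lborel (ball (0::'a) e)"
      using c0 c1 e content_ball_pos[of e "0::'a"] by simp
    also have "\<dots> = integral\<^sup>L lborel (\<lambda>x. (c0 * c1) * indicator (ball (0::'a) e) x)"
      by simp
    also have "\<dots> \<le> integral\<^sup>L lborel w"
    proof (rule integral_mono)
      show "integrable lborel (\<lambda>x. (c0 * c1) * indicator (ball (0::'a) e) x)"
      proof -
        have "emeasure lborel (ball (0::'a) e) < \<infinity>" by (rule emeasure_bounded_finite) simp
        then have "integrable lborel (indicator (ball (0::'a) e) :: 'a \<Rightarrow> real)"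
          by (intro integrable_real_indicator) auto
        then show ?thesis by (rule integrable_mult_right)
      qed
      show "integrable lborel w" by (rule iw(1))
      fix x show "c0 * c1 * indicator (ball 0 e) x \<le> w x"
        using e fpS(1) w0[of x] by (auto simp: w_def indicator_def)
    qed
    finally show ?thesis .
  qed
  have eqq: "rf_velocity \<Omega> q0 q1 t z = (1 / integral\<^sup>L lborel u) *\<^sub>R integral\<^sup>L lborel (\<lambda>x. u x *\<^sub>R x)"
    unfolding rf_velocity_def set_lebesgue_integral_def u_def[abs_def] fq_def[abs_def] S_def by simp
  have eqp: "rf_velocity \<Omega> p0 p1 t z = (1 / integral\<^sup>L lborel w) *\<^sub>R integral\<^sup>L lborel (\<lambda>x. w x *\<^sub>R x)"
    unfolding rf_velocity_def set_lebesgue_integral_def w_def[abs_def] fp_def[abs_def] S_def by simp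
  have "norm (rf_velocity \<Omega> q0 q1 t z - rf_velocity \<Omega> p0 p1 t z)
     \<le> 2 * diameter \<Omega> * (exp (2*r) - exp (-2*r)) / exp (-2*r)"
    unfolding eqq eqp by (rule key[OF iw(1) iu(1) iw(2) iu(2) w0 ab1 ab2 _ W0 Dw]) auto
  also have "\<dots> = 2 * diameter \<Omega> * (exp (4 * r) - 1)"
  proof -
    have "exp (2*r) / exp (-2*r) = exp (4*r)" by (simp add: exp_minus field_simps flip: exp_add)
    moreover have "exp (-2*r) / exp (-2*r) = 1" by simp
    ultimately have "(exp (2*r) - exp (-2*r)) / exp (-2*r) = exp (4 * r) - 1"
      by (simp add: diff_divide_distrib)
    then show ?thesis by (simp add: times_divide_eq_right[symmetric] mult.assoc)
  qed
  finally show ?thesis .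
qed



lemma ln_bounds:
  fixes p q r :: real
  assumes "0 < p" "0 < q" "\<bar>ln (q / p)\<bar> \<le> r"
  shows "exp (-r) * p \<le> q \<and> q \<le> exp r * p"
proof -
  have qp: "0 < q / p" using assms by simp
  have "q / p = exp (ln (q / p))" using qp by simp
  also have "\<dots> \<le> exp r" using assms(3) by simp
  finally have 1: "q / p \<le> exp r" .
  have "exp (-r) \<le> exp (ln (q / p))" using assms(3) by simp
  also have "\<dots> = q / p" using qp by simp
  finally have 2: "exp (-r) \<le> q / p" .
  show ?thesis using 1 2 assms(1) by (simp add: pos_divide_le_eq pos_le_divide_eq)
qed

lemma lre_nonneg:
  assumes "\<Omega> \<noteq> {}"
  shows "0 \<le> log_ratio_err \<Omega> p0 p1 q0 q1"
proof -
  obtain x where x: "x \<in> \<Omega>" using assms by blast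
  have "0 \<le> (if q0 x > 0 \<and> q1 x > 0
               then ereal (max \<bar>ln (q0 x / p0 x)\<bar> \<bar>ln (q1 x / p1 x)\<bar>) else \<infinity>)" by (auto simp: le_max_iff_disj)
  also have "\<dots> \<le> log_ratio_err \<Omega> p0 p1 q0 q1"
    unfolding log_ratio_err_def by (rule SUP_upper[OF x])
  finally show ?thesis .
qed

lemma lre_point:
  assumes "log_ratio_err \<Omega> p0 p1 q0 q1 = ereal r" "x \<in> \<Omega>"
  shows "q0 x > 0 \<and> q1 x > 0 \<and> \<bar>ln (q0 x / p0 x)\<bar> \<le> r \<and> \<bar>ln (q1 x / p1 x)\<bar> \<le> r"
proof -
  have le: "(if q0 x > 0 \<and> q1 x > 0
               then ereal (max \<bar>ln (q0 x / p0 x)\<bar> \<bar>ln (q1 x / p1 x)\<bar>) else \<infinity>) \<le> ereal r"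
    unfolding assms(1)[symmetric] log_ratio_err_def by (rule SUP_upper[OF assms(2)])
  then have pos: "q0 x > 0 \<and> q1 x > 0" by (auto split: if_splits)
  then show ?thesis using le by auto
qed

lemma part1:
  fixes \<Omega> :: "'a::euclidean_space set" and p0 p1 q0 q1 :: "'a \<Rightarrow> real"
  assumes cO: "compact \<Omega>" and iO: "interior \<Omega> \<noteq> {}"
    and dens: "\<And>p. p \<in> {p0, p1} \<Longrightarrow>
        (\<forall>x. p x \<ge> 0) \<and> (\<forall>x. x \<notin> \<Omega> \<longrightarrow> p x = 0) \<and> integrable lborel p
        \<and> integral\<^sup>L lborel p = 1 \<and> continuous_on \<Omega> p
        \<and> (\<exists>B. \<forall>x\<in>\<Omega>. p x \<le> B) \<and> (\<exists>c>0. \<forall>x\<in>\<Omega>. c \<le> p x)"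
    and mq: "q0 \<in> borel_measurable lborel" "q1 \<in> borel_measurable lborel"
    and fin: "log_ratio_err \<Omega> p0 p1 q0 q1 \<noteq> \<infinity>"
  shows "(SUP (t, z)\<in>{0..1} \<times> interior \<Omega>.
               ereal (norm (rf_velocity \<Omega> (restrict0 \<Omega> q0) (restrict0 \<Omega> q1) t z
                            - rf_velocity \<Omega> p0 p1 t z)))
            \<le> ereal (2 * diameter \<Omega> *
                (exp (4 * real_of_ereal (log_ratio_err \<Omega> p0 p1 q0 q1)) - 1))"
proof -
  define r where "r = real_of_ereal (log_ratio_err \<Omega> p0 p1 q0 q1)"
  have One: "\<Omega> \<noteq> {}" using iO interior_subset by blast
  have Lr: "log_ratio_err \<Omega> p0 p1 q0 q1 = ereal r"
    using lre_nonneg[OF One, of p0 p1 q0 q1] fin unfolding r_def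
    by (cases "log_ratio_err \<Omega> p0 p1 q0 q1") auto
  have d0: "integrable lborel p0" "\<exists>B. \<forall>x\<in>\<Omega>. p0 x \<le> B" "\<exists>c>0. \<forall>x\<in>\<Omega>. c \<le> p0 x"
    using dens[of p0] by auto
  have d1: "integrable lborel p1" "\<exists>B. \<forall>x\<in>\<Omega>. p1 x \<le> B" "\<exists>c>0. \<forall>x\<in>\<Omega>. c \<le> p1 x"
    using dens[of p1] by auto
  obtain B0 where B0: "\<And>x. x \<in> \<Omega> \<Longrightarrow> p0 x \<le> B0" using d0 by blast
  obtain B1 where B1: "\<And>x. x \<in> \<Omega> \<Longrightarrow> p1 x \<le> B1" using d1 by blast
  obtain c0 where c0: "0 < c0" "\<And>x. x \<in> \<Omega> \<Longrightarrow> c0 \<le> p0 x" using d0 by blast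
  obtain c1 where c1: "0 < c1" "\<And>x. x \<in> \<Omega> \<Longrightarrow> c1 \<le> p1 x" using d1 by blast
  have mp0: "p0 \<in> borel_measurable borel" using borel_measurable_integrable[OF d0(1)] by simp
  have mp1: "p1 \<in> borel_measurable borel" using borel_measurable_integrable[OF d1(1)] by simp
  have Ob[measurable]: "\<Omega> \<in> sets borel" using cO by (simp add: borel_compact)
  have mq0[measurable]: "q0 \<in> borel_measurable borel" using mq by simp
  have mq1[measurable]: "q1 \<in> borel_measurable borel" using mq by simp
  have mr0: "restrict0 \<Omega> q0 \<in> borel_measurable borel" unfolding restrict0_def by measurable
  have mr1: "restrict0 \<Omega> q1 \<in> borel_measurable borel" unfolding restrict0_def by measurable
  have r0: "exp (-r) * p0 x \<le> restrict0 \<Omega> q0 x \<and> restrict0 \<Omega> q0 x \<le> exp r * p0 x" if x: "x \<in> \<Omega>" for x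
  proof -
    have "0 < p0 x" using c0(1) c0(2)[OF x] by linarith
    then show ?thesis using lre_point[OF Lr x] ln_bounds x by (simp add: restrict0_def)
  qed
  have r1: "exp (-r) * p1 x \<le> restrict0 \<Omega> q1 x \<and> restrict0 \<Omega> q1 x \<le> exp r * p1 x" if x: "x \<in> \<Omega>" for x
  proof -
    have "0 < p1 x" using c1(1) c1(2)[OF x] by linarith
    then show ?thesis using lre_point[OF Lr x] ln_bounds x by (simp add: restrict0_def)
  qed
  show ?thesis
    unfolding r_def[symmetric]
  proof (rule SUP_least)
    fix i assume i: "i \<in> {0..1::real} \<times> interior \<Omega>"
    obtain t z where tz: "i = (t, z)" by (cases i)
    have "norm (rf_velocity \<Omega> (restrict0 \<Omega> q0) (restrict0 \<Omega> q1) t z - rf_velocity \<Omega> p0 p1 t z)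
        \<le> 2 * diameter \<Omega> * (exp (4 * r) - 1)"
      using i tz by (intro vel_bound[OF cO _ _ _ mp0 mp1 mr0 mr1 c0 c1 B0 B1 r0 r1]) auto
    then show "(\<lambda>(t, z). ereal (norm (rf_velocity \<Omega> (restrict0 \<Omega> q0) (restrict0 \<Omega> q1) t z
                            - rf_velocity \<Omega> p0 p1 t z))) i \<le> ereal (2 * diameter \<Omega> * (exp (4 * r) - 1))"
      using tz by simp
  qed
qed

lemma outer_prob_mono:
  assumes "A \<subseteq> A'" "A' \<subseteq> space M"
  shows "outer_prob M A \<le> outer_prob M A'"
  unfolding outer_prob_def
proof (rule cInf_superset_mono)
  show "{measure M B |B. B \<in> sets M \<and> A' \<subseteq> B} \<noteq> {}" using assms(2) by blast
  show "bdd_below {measure M B |B. B \<in> sets M \<and> A \<subseteq> B}"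
    by (rule bdd_belowI[where m=0]) auto
  show "{measure M B |B. B \<in> sets M \<and> A' \<subseteq> B} \<subseteq> {measure M B |B. B \<in> sets M \<and> A \<subseteq> B}"
    using assms(1) by blast
qed

lemma exp_m1_le:
  fixes x :: real assumes "0 \<le> x"
  shows "exp x - 1 \<le> x * exp x"
proof -
  have "1 + (-x) \<le> exp (-x)" by (rule exp_ge_add_one_self)
  then have "(1 - x) * exp x \<le> exp (-x) * exp x" by (intro mult_right_mono) auto
  also have "exp (-x) * exp x = 1" by (simp flip: exp_add)
  finally show ?thesis by (simp add: algebra_simps)
qed

theorem theorem11:
  fixes \<Omega> :: "'a::euclidean_space set"
    and p0 p1 :: "'a \<Rightarrow> real"
    and M :: "'b measure"
    and ph0 ph1 :: "nat \<Rightarrow> 'b \<Rightarrow> 'a \<Rightarrow> real"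
  assumes "compact \<Omega>" and "convex \<Omega>" and "interior \<Omega> \<noteq> {}"
    and dens: "\<And>p. p \<in> {p0, p1} \<Longrightarrow>
        (\<forall>x. p x \<ge> 0) \<and> (\<forall>x. x \<notin> \<Omega> \<longrightarrow> p x = 0) \<and> integrable lborel p
        \<and> integral\<^sup>L lborel p = 1 \<and> continuous_on \<Omega> p
        \<and> (\<exists>B. \<forall>x\<in>\<Omega>. p x \<le> B) \<and> (\<exists>c>0. \<forall>x\<in>\<Omega>. c \<le> p x)"
    and "prob_space M"
    and meas: "\<And>n \<omega>. ph0 n \<omega> \<in> borel_measurable lborel \<and> ph1 n \<omega> \<in> borel_measurable lborel"
  shows "(\<forall>n\<ge>1. \<forall>\<omega>.
            log_ratio_err \<Omega> p0 p1 (ph0 n \<omega>) (ph1 n \<omega>) \<noteq> \<infinity> \<longrightarrow>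
            (SUP (t, z)\<in>{0..1} \<times> interior \<Omega>.
               ereal (norm (rf_velocity \<Omega> (restrict0 \<Omega> (ph0 n \<omega>)) (restrict0 \<Omega> (ph1 n \<omega>)) t z
                            - rf_velocity \<Omega> p0 p1 t z)))
            \<le> ereal (2 * diameter \<Omega> *
                (exp (4 * real_of_ereal (log_ratio_err \<Omega> p0 p1 (ph0 n \<omega>) (ph1 n \<omega>))) - 1)))
       \<and> (small_op_one M (\<lambda>n \<omega>. log_ratio_err \<Omega> p0 p1 (ph0 n \<omega>) (ph1 n \<omega>)) \<longrightarrow>
          big_Op M
            (\<lambda>n \<omega>. SUP (t, z)\<in>{0..1} \<times> interior \<Omega>.
               ereal (norm (rf_velocity \<Omega> (restrict0 \<Omega> (ph0 n \<omega>)) (restrict0 \<Omega> (ph1 n \<omega>)) t z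
                            - rf_velocity \<Omega> p0 p1 t z)))
            (\<lambda>n \<omega>. log_ratio_err \<Omega> p0 p1 (ph0 n \<omega>) (ph1 n \<omega>)))"
proof -
  let ?L = "\<lambda>n \<omega>. log_ratio_err \<Omega> p0 p1 (ph0 n \<omega>) (ph1 n \<omega>)"
  let ?X = "\<lambda>n \<omega>. SUP (t, z)\<in>{0..1} \<times> interior \<Omega>.
               ereal (norm (rf_velocity \<Omega> (restrict0 \<Omega> (ph0 n \<omega>)) (restrict0 \<Omega> (ph1 n \<omega>)) t z
                            - rf_velocity \<Omega> p0 p1 t z))"
  have One: "\<Omega> \<noteq> {}" using assms(3) interior_subset by blast
  have P1: "?X n \<omega> \<le> ereal (2 * diameter \<Omega> * (exp (4 * real_of_ereal (?L n \<omega>)) - 1))"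
    if "?L n \<omega> \<noteq> \<infinity>" for n \<omega>
    using part1[OF assms(1) assms(3) dens _ _ that] meas by blast
  show ?thesis
  proof (intro conjI impI allI)
    fix n :: nat and \<omega> assume "1 \<le> n" "?L n \<omega> \<noteq> \<infinity>"
    then show "?X n \<omega> \<le> ereal (2 * diameter \<Omega> * (exp (4 * real_of_ereal (?L n \<omega>)) - 1))"
      using P1 by blast
  next
    assume so: "small_op_one M ?L"
    show "big_Op M ?X ?L"
      unfolding big_Op_def
    proof (intro allI impI)
      fix \<epsilon> :: real assume e: "\<epsilon> > 0"
      have lim: "(\<lambda>n. outer_prob M {\<omega>\<in>space M. \<bar>?L n \<omega>\<bar> > ereal 1}) \<longlonglongrightarrow> 0"
        using so unfolding small_op_one_def by simp
      obtain N0 where N0: "\<And>n. n \<ge> N0 \<Longrightarrow> outer_prob M {\<omega>\<in>space M. \<bar>?L n \<omega>\<bar> > ereal 1} < \<epsilon>"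
        using order_tendstoD(2)[OF lim e] unfolding eventually_sequentially by blast
      define C where "C = 8 * diameter \<Omega> * exp 4"
      obtain z0 where z0: "z0 \<in> interior \<Omega>" using assms(3) by blast
      have Xnn: "0 \<le> ?X n \<omega>" for n \<omega>
        by (rule order.trans[OF _ SUP_upper[of "(0, z0)"]]) (use z0 in auto)
      have d0: "0 \<le> diameter \<Omega>" using compact_imp_bounded[OF assms(1)] by (rule diameter_ge_0)
      have sub: "{\<omega>\<in>space M. \<bar>?X n \<omega>\<bar> > ereal C * \<bar>?L n \<omega>\<bar>} \<subseteq> {\<omega>\<in>space M. \<bar>?L n \<omega>\<bar> > ereal 1}" for n
      proof (rule subsetI, rule ccontr)
        fix \<omega> assume w: "\<omega> \<in> {\<omega>\<in>space M. \<bar>?X n \<omega>\<bar> > ereal C * \<bar>?L n \<omega>\<bar>}"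
          and nw: "\<omega> \<notin> {\<omega>\<in>space M. \<bar>?L n \<omega>\<bar> > ereal 1}"
        have le1: "\<bar>?L n \<omega>\<bar> \<le> ereal 1" using w nw by auto
        have nn: "0 \<le> ?L n \<omega>" by (rule lre_nonneg[OF One])
        obtain r where r: "?L n \<omega> = ereal r" "0 \<le> r" "r \<le> 1"
          using le1 nn by (cases "?L n \<omega>") auto
        have "?X n \<omega> \<le> ereal (2 * diameter \<Omega> * (exp (4 * r) - 1))" using P1[of n \<omega>] r by simp
        also have "2 * diameter \<Omega> * (exp (4 * r) - 1) \<le> C * r"
        proof -
          have "exp (4 * r) - 1 \<le> (4 * r) * exp (4 * r)" using exp_m1_le[of "4 * r"] r by simp
          also have "\<dots> \<le> (4 * r) * exp 4" using r by (intro mult_left_mono) auto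
          finally have "2 * diameter \<Omega> * (exp (4 * r) - 1) \<le> 2 * diameter \<Omega> * ((4 * r) * exp 4)"
            using d0 by (intro mult_left_mono) auto
          then show ?thesis by (simp add: C_def algebra_simps)
        qed
        then have "ereal (2 * diameter \<Omega> * (exp (4 * r) - 1)) \<le> ereal C * \<bar>?L n \<omega>\<bar>"
          using r by simp
        finally have "?X n \<omega> \<le> ereal C * \<bar>?L n \<omega>\<bar>" .
        moreover have "\<bar>?X n \<omega>\<bar> = ?X n \<omega>" using Xnn[of n \<omega>] by (simp add: abs_ereal_ge0)
        ultimately show False using w by auto
      qed
      show "\<exists>C N. \<forall>n\<ge>N. outer_prob M {\<omega>\<in>space M. \<bar>?X n \<omega>\<bar> > ereal C * \<bar>?L n \<omega>\<bar>} < \<epsilon>"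
      proof (intro exI allI impI)
        fix n assume n: "N0 \<le> n"
        have "outer_prob M {\<omega>\<in>space M. \<bar>?X n \<omega>\<bar> > ereal C * \<bar>?L n \<omega>\<bar>}
            \<le> outer_prob M {\<omega>\<in>space M. \<bar>?L n \<omega>\<bar> > ereal 1}"
          by (rule outer_prob_mono[OF sub]) auto
        also have "\<dots> < \<epsilon>" by (rule N0[OF n])
        finally show "outer_prob M {\<omega>\<in>space M. \<bar>?X n \<omega>\<bar> > ereal C * \<bar>?L n \<omega>\<bar>} < \<epsilon>" .
      qed
    qed
  qed
qed


end
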